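(* Let $0\le b<d\le n$ be integers and fix a homological degree. (1) If $\hat z$ is a relative cycle of $\hat K(b,d]$ that contains $\tau\times\{d\}$ with $\min\tau=d$ and whose boundary contains $\sigma\times\{b\}$ with $\min\sigma=b$, then $[\hat z]$ lies neither in the image of $H(\hat K(b-1,d])$ nor in the image of $H(\hat K(b,d-1])$ in $H(\hat K(b,d])$ (i.e. $\hat z$ is an apex representative). (2) If $\hat z$ is a relative cycle of $\hat K[b,d)$ that contains $\tau\times\{b\}$ with $\max\tau=b$ and whose boundary contains $\sigma\times\{d\}$ with $\max\sigma=d$, then $[\hat z]$ lies neither in the image of $H(\hat K[b+1,d))$ nor in the image of $H(\hat K[b,d+1))$ in $H(\hat K[b,d))$. (3) If $\hat z$ is a cycle of $\hat K[b,d]$ that contains $\sigma\times\{b\}$ and $\tau\times\{d\}$ with $\max\sigma=b$ and $\min\tau=d$, then $[\hat z]$ lies neither in the image of $H(\hat K[b+1,d])$ nor in the image of $H(\hat K[b,d-1])$ in $H(\hat K[b,d])$. (4) If $\hat z$ is a relative cycle of $\hat K(b,d)$ whose boundary contains $\sigma\times\{b\}$ with $\min\sigma=b$ and $\tau\times\{d\}$ with $\max\tau=d$, then $[\hat z]$ lies neither in the image of $H(\hat K(b-1,d))$ nor in the image of $H(\hat K(b,d+1))$ in $H(\hat K(b,d))$.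
   Context: Fix a field $\mathbb F$; all chains and homology groups have coefficients in $\mathbb F$. Let $n\ge 1$ and let $K$ be a finite $\Delta$-complex (distinct simplices may have the same boundary) in which every simplex $\sigma$ carries an integer interval $T(\sigma)=[\min\sigma,\max\sigma]\subseteq[0,n]$ with $\min\sigma<\max\sigma$, such that for each integer $i$ the set $K_i=\{\sigma: i\in T(\sigma)\}$ is a subcomplex (these form a zigzag $K_0\to K_1\leftarrow K_2\to\cdots$), and such that whenever $\sigma$ is a proper face of $\tau$ we have $\min\sigma<\min\tau<\max\tau<\max\sigma$. The prism $\hat K$ is the cell complex whose cells are the vertical cells $\sigma\times\{i\}$ for $\sigma\in K$ and integers $i\in T(\sigma)$ (of dimension $\dim\sigma$) and the horizontal cells $\sigma\times[i,i+1]$ for integers $i$ with $[i,i+1]\subseteq T(\sigma)$ (of dimension $\dim\sigma+1$), with boundary $\partial(\sigma\times\{i\})=(\partial\sigma)\times\{i\}$ and $\partial(\sigma\times[i,i+1])=(\partial\sigma)\times[i,i+1]+(-1)^{\dim\sigma}(\sigma\times\{i+1\}-\sigma\times\{i\})$ (terms not in $\hat K$ do not occur). For integers $i\le j$, $\hat K_i^j$ is the subcomplex of cells $\sigma\times T$ with $T\subseteq[i,j]$; so $\hat K_{-1}^{n+1}=\hat K$. For integers $b\le d$ define the pairs $\hat K[b,d]=(\hat K_b^d,\emptyset)$, $\hat K(b,d]=(\hat K_{-1}^d,\hat K_{-1}^b)$, $\hat K[b,d)=(\hat K_b^{n+1},\hat K_d^{n+1})$, $\hat K(b,d)=(\hat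 K,\hat K_{-1}^b\cup\hat K_d^{n+1})$, and write $H(\cdot)$ for their relative homology; maps between these groups are induced by inclusions of pairs. A relative cycle of a pair $(X,A)$ is a chain in $X$ whose boundary lies in $A$. A chain "contains" a cell if the cell's coefficient is nonzero. *)

theory Defs
  imports Main
begin

text \<open>A finite Delta-complex (semi-simplicial set) whose simplices carry integer
  intervals [smin, smax].  Simplices have type 'a; the i-th face of a simplex s of
  dimension d > 0 is sface s i (0 <= i <= d).\<close>

record 'a fcomplex =
  simp  :: "'a set"
  sdim  :: "'a \<Rightarrow> nat"
  sface :: "'a \<Rightarrow> nat \<Rightarrow> 'a"
  smin  :: "'a \<Rightarrow> int"
  smax  :: "'a \<Rightarrow> int"

definition imm_face :: "'a fcomplex \<Rightarrow> 'a \<Rightarrow> 'a \<Rightarrow> bool" where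
  "imm_face C t s \<longleftrightarrow> t \<in> simp C \<and> 0 < sdim C t \<and> (\<exists>k\<le>sdim C t. s = sface C t k)"

definition proper_face :: "'a fcomplex \<Rightarrow> 'a \<Rightarrow> 'a \<Rightarrow> bool" where
  "proper_face C s t \<longleftrightarrow> (imm_face C)\<^sup>+\<^sup>+ t s"

definition filtered_dcomplex :: "'a fcomplex \<Rightarrow> int \<Rightarrow> bool" where
  "filtered_dcomplex C n \<longleftrightarrow>
     finite (simp C)
   \<and> (\<forall>s\<in>simp C. 0 < sdim C s \<longrightarrow>
        (\<forall>k\<le>sdim C s. sface C s k \<in> simp C \<and> sdim C (sface C s k) = sdim C s - 1))
   \<and> (\<forall>s\<in>simp C. 2 \<le> sdim C s \<longrightarrow>
        (\<forall>i j. i < j \<and> j \<le> sdim C s \<longrightarrow>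
           sface C (sface C s j) i = sface C (sface C s i) (j - 1)))
   \<and> (\<forall>s\<in>simp C. 0 \<le> smin C s \<and> smin C s < smax C s \<and> smax C s \<le> n)
   \<and> (\<forall>i. \<forall>s\<in>simp C. smin C s \<le> i \<and> i \<le> smax C s \<and> 0 < sdim C s \<longrightarrow>
        (\<forall>k\<le>sdim C s. smin C (sface C s k) \<le> i \<and> i \<le> smax C (sface C s k)))
   \<and> (\<forall>s t. proper_face C s t \<longrightarrow>
        smin C s < smin C t \<and> smin C t < smax C t \<and> smax C t < smax C s)"

text \<open>Cells of the prism: Vc s i = s x {i}, Hc s i = s x [i,i+1].\<close>
datatype 'a cell = Vc 'a int | Hc 'a int

definition prism :: "'a fcomplex \<Rightarrow> 'a cell set" where
  "prism C = {Vc s i | s i. s \<in> simp C \<and> smin C s \<le> i \<and> i \<le> smax C s}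
           \<union> {Hc s i | s i. s \<in> simp C \<and> smin C s \<le> i \<and> i + 1 \<le> smax C s}"

fun cdim :: "'a fcomplex \<Rightarrow> 'a cell \<Rightarrow> nat" where
  "cdim C (Vc s i) = sdim C s"
| "cdim C (Hc s i) = sdim C s + 1"

text \<open>Subcomplex hat K_i^j: cells s x T with T contained in [i,j].\<close>
definition prism_sub :: "'a fcomplex \<Rightarrow> int \<Rightarrow> int \<Rightarrow> 'a cell set" where
  "prism_sub C i j = {c \<in> prism C. case c of Vc s t \<Rightarrow> i \<le> t \<and> t \<le> j
                                           | Hc s t \<Rightarrow> i \<le> t \<and> t + 1 \<le> j}"

text \<open>Coefficient of cell x in the boundary of cell y.\<close>
fun bcoef :: "'a fcomplex \<Rightarrow> 'a cell \<Rightarrow> 'a cell \<Rightarrow> 'f::field" where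
  "bcoef C (Vc s i) x =
     (if sdim C s = 0 then 0
      else (\<Sum>k\<in>{0..sdim C s}. if x = Vc (sface C s k) i then (-1)^k else 0))"
| "bcoef C (Hc s i) x =
     (if sdim C s = 0 then 0
      else (\<Sum>k\<in>{0..sdim C s}. if x = Hc (sface C s k) i then (-1)^k else 0))
     + (-1)^(sdim C s) * ((if x = Vc s (i + 1) then 1 else 0) - (if x = Vc s i then 1 else 0))"

definition bnd :: "'a fcomplex \<Rightarrow> ('a cell \<Rightarrow> 'f::field) \<Rightarrow> 'a cell \<Rightarrow> 'f" where
  "bnd C c = (\<lambda>x. \<Sum>y\<in>prism C. c y * bcoef C y x)"

definition is_chain :: "'a fcomplex \<Rightarrow> nat \<Rightarrow> 'a cell set \<Rightarrow> ('a cell \<Rightarrow> 'f::field) \<Rightarrow> bool" where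
  "is_chain C p X c \<longleftrightarrow> (\<forall>x. c x \<noteq> 0 \<longrightarrow> x \<in> X \<and> cdim C x = p)"

definition rel_cycle :: "'a fcomplex \<Rightarrow> nat \<Rightarrow> 'a cell set \<times> 'a cell set \<Rightarrow> ('a cell \<Rightarrow> 'f::field) \<Rightarrow> bool" where
  "rel_cycle C p P z \<longleftrightarrow> is_chain C p (fst P) z \<and> (\<forall>x. bnd C z x \<noteq> 0 \<longrightarrow> x \<in> snd P)"

text \<open>The class [z] in H_p(P) lies in the image of H_p(P') \<rightarrow> H_p(P) induced by inclusion:
  z is homologous in (X,A) to a relative cycle of P'.\<close>
definition in_image :: "'a fcomplex \<Rightarrow> nat \<Rightarrow> 'a cell set \<times> 'a cell set \<Rightarrow> 'a cell set \<times> 'a cell set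
                        \<Rightarrow> ('a cell \<Rightarrow> 'f::field) \<Rightarrow> bool" where
  "in_image C p P' P z \<longleftrightarrow>
     (\<exists>z' c. rel_cycle C p P' z' \<and> is_chain C (Suc p) (fst P) c \<and>
        (\<forall>x. z x - z' x - bnd C c x \<noteq> 0 \<longrightarrow> x \<in> snd P))"

definition Kcc :: "'a fcomplex \<Rightarrow> int \<Rightarrow> int \<Rightarrow> 'a cell set \<times> 'a cell set" where  \<comment> \<open>[b,d]\<close>
  "Kcc C b d = (prism_sub C b d, {})"
definition Koc :: "'a fcomplex \<Rightarrow> int \<Rightarrow> int \<Rightarrow> 'a cell set \<times> 'a cell set" where  \<comment> \<open>(b,d]\<close>
  "Koc C b d = (prism_sub C (-1) d, prism_sub C (-1) b)"
definition Kco :: "'a fcomplex \<Rightarrow> int \<Rightarrow> int \<Rightarrow> int \<Rightarrow> 'a cell set \<times> 'a cell set" where  \<comment> \<open>[b,d)\<close>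
  "Kco C n b d = (prism_sub C b (n + 1), prism_sub C d (n + 1))"
definition Koo :: "'a fcomplex \<Rightarrow> int \<Rightarrow> int \<Rightarrow> int \<Rightarrow> 'a cell set \<times> 'a cell set" where  \<comment> \<open>(b,d)\<close>
  "Koo C n b d = (prism_sub C (-1) (n + 1), prism_sub C (-1) b \<union> prism_sub C d (n + 1))"

end

theory Submission
  imports Defs
begin

lemma face_ineq:
  assumes f: "filtered_dcomplex C n" and r: "r \<in> simp C" and "0 < sdim C r" and "k \<le> sdim C r"
  shows "smin C (sface C r k) < smin C r \<and> smax C r < smax C (sface C r k)"
proof -
  have "imm_face C r (sface C r k)" using assms unfolding imm_face_def by blast
  hence "proper_face C (sface C r k) r" unfolding proper_face_def by blast
  thus ?thesis using f unfolding filtered_dcomplex_def by blast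
qed

lemma sum_nz:
  assumes "(\<Sum>k\<in>A. if P k then (g k :: 'f::field) else 0) \<noteq> 0"
  shows "\<exists>k\<in>A. P k"
  using assms by (metis (mono_tags, lifting) sum.neutral)

lemma if0_ne: "(if c then 0 else (x::'f::field)) \<noteq> 0 \<Longrightarrow> \<not> c \<and> x \<noteq> 0"
  by (cases c) simp_all

lemma if0_ne2: "(if c then 0 else (x::'f::field)) + y \<noteq> 0 \<Longrightarrow> y = 0 \<Longrightarrow> \<not> c \<and> x \<noteq> 0"
  by (cases c) simp_all

lemma bcoef_Vc_cases:
  assumes "bcoef C y (Vc s t) \<noteq> (0::'f::field)"
  shows "(\<exists>r k. y = Vc r t \<and> 0 < sdim C r \<and> k \<le> sdim C r \<and> s = sface C r k)
         \<or> y = Hc s t \<or> y = Hc s (t - 1)"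
proof (cases y)
  case (Vc r i)
  have "\<not> sdim C r = 0 \<and> (\<Sum>k\<in>{0..sdim C r}. if Vc s t = Vc (sface C r k) i then (-1::'f)^k else 0) \<noteq> 0"
    by (rule if0_ne) (use assms[unfolded Vc bcoef.simps] in assumption)
  moreover have "\<exists>k\<in>{0..sdim C r}. Vc s t = Vc (sface C r k) i" by (rule sum_nz[where g="\<lambda>k. (-1::'f)^k"]) (use calculation in blast)
  ultimately show ?thesis using Vc by auto
next
  case (Hc r i)
  have z: "(\<Sum>k\<in>{0..sdim C r}. if Vc s t = Hc (sface C r k) i then (-1::'f)^k else 0) = 0"
    by simp
  from Hc assms have "Vc s t = Vc r (i+1) \<or> Vc s t = Vc r i"
    by (auto split: if_splits simp: z)
  thus ?thesis using Hc by auto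
qed

lemma bcoef_Hc_cases:
  assumes "bcoef C y (Hc s t) \<noteq> (0::'f::field)"
  shows "\<exists>r k. y = Hc r t \<and> 0 < sdim C r \<and> k \<le> sdim C r \<and> s = sface C r k"
proof (cases y)
  case (Vc r i)
  have z: "(\<Sum>k\<in>{0..sdim C r}. if Hc s t = Vc (sface C r k) i then (-1::'f)^k else 0) = 0"
    by simp
  from Vc assms show ?thesis by (auto split: if_splits simp: z)
next
  case (Hc r i)
  have "\<not> sdim C r = 0 \<and> (\<Sum>k\<in>{0..sdim C r}. if Hc s t = Hc (sface C r k) i then (-1::'f)^k else 0) \<noteq> 0"
    by (rule if0_ne2) (use assms[unfolded Hc bcoef.simps] in assumption, simp)
  moreover have "\<exists>k\<in>{0..sdim C r}. Hc s t = Hc (sface C r k) i" by (rule sum_nz[where g="\<lambda>k. (-1::'f)^k"]) (use calculation in blast)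
  ultimately show ?thesis using Hc by auto
qed

lemma up_min:
  assumes f: "filtered_dcomplex C n" and y: "y \<in> prism C"
    and b: "bcoef C y (Vc s t) \<noteq> (0::'f::field)" and m: "smin C s = t"
  shows "y = Hc s t"
proof -
  from bcoef_Vc_cases[OF b] consider
    (a) r k where "y = Vc r t" "0 < sdim C r" "k \<le> sdim C r" "s = sface C r k"
    | (b) "y = Hc s t" | (c) "y = Hc s (t - 1)" by blast
  thus ?thesis
  proof cases
    case a
    with y have "r \<in> simp C" "smin C r \<le> t" unfolding prism_def by auto
    with face_ineq[OF f this(1) a(2,3)] a m show ?thesis by auto
  next
    case c
    with y m show ?thesis unfolding prism_def by auto
  qed
qed

lemma up_max:
  assumes f: "filtered_dcomplex C n" and y: "y \<in> prism C"
    and b: "bcoef C y (Vc s t) \<noteq> (0::'f::field)" and m: "smax C s = t"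
  shows "y = Hc s (t - 1)"
proof -
  from bcoef_Vc_cases[OF b] consider
    (a) r k where "y = Vc r t" "0 < sdim C r" "k \<le> sdim C r" "s = sface C r k"
    | (b) "y = Hc s t" | (c) "y = Hc s (t - 1)" by blast
  thus ?thesis
  proof cases
    case a
    with y have "r \<in> simp C" "t \<le> smax C r" unfolding prism_def by auto
    with face_ineq[OF f this(1) a(2,3)] a m show ?thesis by auto
  next
    case b
    with y m show ?thesis unfolding prism_def by auto
  qed
qed

lemma hup_min:
  assumes f: "filtered_dcomplex C n" and y: "y \<in> prism C"
    and b: "bcoef C y (Hc s t) \<noteq> (0::'f::field)" and m: "smin C s = t"
  shows False
proof -
  from bcoef_Hc_cases[OF b] obtain r k where
    a: "y = Hc r t" "0 < sdim C r" "k \<le> sdim C r" "s = sface C r k" by blast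
  with y have "r \<in> simp C" "smin C r \<le> t" unfolding prism_def by auto
  with face_ineq[OF f this(1) a(2,3)] a m show ?thesis by auto
qed

lemma hup_max:
  assumes f: "filtered_dcomplex C n" and y: "y \<in> prism C"
    and b: "bcoef C y (Hc s t) \<noteq> (0::'f::field)" and m: "smax C s = t + 1"
  shows False
proof -
  from bcoef_Hc_cases[OF b] obtain r k where
    a: "y = Hc r t" "0 < sdim C r" "k \<le> sdim C r" "s = sface C r k" by blast
  with y have "r \<in> simp C" "t + 1 \<le> smax C r" unfolding prism_def by auto
  with face_ineq[OF f this(1) a(2,3)] a m show ?thesis by auto
qed

lemma bnd_zero:
  assumes "\<And>y. y \<in> prism C \<Longrightarrow> bcoef C y x \<noteq> (0::'f::field) \<Longrightarrow> f y = (0::'f)"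
  shows "bnd C f x = 0"
  unfolding bnd_def
proof (rule sum.neutral, rule ballI)
  fix y assume "y \<in> prism C"
  thus "f y * bcoef C y x = 0" using assms by (cases "bcoef C y x = (0::'f)") simp_all
qed

lemma bnd_Vc_min:
  assumes f: "filtered_dcomplex C n" and "smin C s = t" and "g (Hc s t) = (0::'f::field)"
  shows "bnd C g (Vc s t) = 0"
  by (rule bnd_zero) (use up_min[OF f] assms in blast)

lemma bnd_Vc_max:
  assumes f: "filtered_dcomplex C n" and "smax C s = t" and "g (Hc s (t - 1)) = (0::'f::field)"
  shows "bnd C g (Vc s t) = 0"
  by (rule bnd_zero) (use up_max[OF f] assms in blast)

lemma bnd_Hc_min:
  assumes f: "filtered_dcomplex C n" and "smin C s = t"
  shows "bnd C (g::_\<Rightarrow>'f::field) (Hc s t) = 0"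
  by (rule bnd_zero) (use hup_min[OF f] assms in blast)

lemma bnd_Hc_max:
  assumes f: "filtered_dcomplex C n" and "smax C s = t + 1"
  shows "bnd C (g::_\<Rightarrow>'f::field) (Hc s t) = 0"
  by (rule bnd_zero) (use hup_max[OF f] assms in blast)

lemma bnd_lin:
  "bnd C (\<lambda>y. z y - z' y - (h y::'f::field)) x = bnd C z x - bnd C z' x - bnd C h x"
  unfolding bnd_def by (simp add: left_diff_distrib sum_subtractf)

lemma bnd_split:
  "bnd C z x = bnd C z' x + bnd C (bnd C c) x + bnd C (\<lambda>y. z y - z' y - bnd C c y) x"
  for z :: "_ \<Rightarrow> 'f::field"
  by (simp add: bnd_lin)

theorem theorem5p3:
  fixes C :: "'a fcomplex" and n b d :: int and p :: nat
  assumes "filtered_dcomplex C n" and "1 \<le> n"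
    and "0 \<le> b" and "b < d" and "d \<le> n"
  shows
   "(\<forall>(z :: 'a cell \<Rightarrow> 'f::field) \<tau> \<sigma>.
       rel_cycle C p (Koc C b d) z \<and> z (Vc \<tau> d) \<noteq> 0 \<and> smin C \<tau> = d
       \<and> bnd C z (Vc \<sigma> b) \<noteq> 0 \<and> smin C \<sigma> = b
     \<longrightarrow> \<not> in_image C p (Koc C (b - 1) d) (Koc C b d) z
       \<and> \<not> in_image C p (Koc C b (d - 1)) (Koc C b d) z)
  \<and> (\<forall>(z :: 'a cell \<Rightarrow> 'f) \<tau> \<sigma>.
       rel_cycle C p (Kco C n b d) z \<and> z (Vc \<tau> b) \<noteq> 0 \<and> smax C \<tau> = b
       \<and> bnd C z (Vc \<sigma> d) \<noteq> 0 \<and> smax C \<sigma> = d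
     \<longrightarrow> \<not> in_image C p (Kco C n (b + 1) d) (Kco C n b d) z
       \<and> \<not> in_image C p (Kco C n b (d + 1)) (Kco C n b d) z)
  \<and> (\<forall>(z :: 'a cell \<Rightarrow> 'f) \<tau> \<sigma>.
       rel_cycle C p (Kcc C b d) z \<and> z (Vc \<sigma> b) \<noteq> 0 \<and> smax C \<sigma> = b
       \<and> z (Vc \<tau> d) \<noteq> 0 \<and> smin C \<tau> = d
     \<longrightarrow> \<not> in_image C p (Kcc C (b + 1) d) (Kcc C b d) z
       \<and> \<not> in_image C p (Kcc C b (d - 1)) (Kcc C b d) z)
  \<and> (\<forall>(z :: 'a cell \<Rightarrow> 'f) \<tau> \<sigma>.
       rel_cycle C p (Koo C n b d) z
       \<and> bnd C z (Vc \<sigma> b) \<noteq> 0 \<and> smin C \<sigma> = b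
       \<and> bnd C z (Vc \<tau> d) \<noteq> 0 \<and> smax C \<tau> = d
     \<longrightarrow> \<not> in_image C p (Koo C n (b - 1) d) (Koo C n b d) z
       \<and> \<not> in_image C p (Koo C n b (d + 1)) (Koo C n b d) z)"
proof (intro conjI allI impI)
  note f = assms(1)
  note bd = assms(4)
  fix z :: "'a cell \<Rightarrow> 'f" and \<tau> \<sigma>
  assume h: "rel_cycle C p (Koc C b d) z \<and> z (Vc \<tau> d) \<noteq> 0 \<and> smin C \<tau> = d
       \<and> bnd C z (Vc \<sigma> b) \<noteq> 0 \<and> smin C \<sigma> = b"
  show "\<not> in_image C p (Koc C (b - 1) d) (Koc C b d) z"
  proof
    assume "in_image C p (Koc C (b - 1) d) (Koc C b d) z"
    then obtain z' c where z': "rel_cycle C p (Koc C (b - 1) d) z'"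
      and w: "\<forall>x. z x - z' x - bnd C c x \<noteq> 0 \<longrightarrow> x \<in> prism_sub C (-1) b"
      unfolding in_image_def Koc_def by auto
    have 1: "bnd C z' (Vc \<sigma> b) = 0" using z' unfolding rel_cycle_def Koc_def prism_sub_def by force
    have 2: "bnd C (bnd C c) (Vc \<sigma> b) = 0"
      by (rule bnd_Vc_min[OF f], use h in simp, rule bnd_Hc_min[OF f], use h in simp)
    have "z (Hc \<sigma> b) - z' (Hc \<sigma> b) - bnd C c (Hc \<sigma> b) = 0"
      using w[rule_format, of "Hc \<sigma> b"] unfolding prism_sub_def by force
    note prev = this
    have 3: "bnd C (\<lambda>y. z y - z' y - bnd C c y) (Vc \<sigma> b) = 0" by (rule bnd_Vc_min[OF f]) (use h prev in simp_all)
    show False using bnd_split[of C z "Vc \<sigma> b" z' c] 1 2 3 h by simp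
  qed
  show "\<not> in_image C p (Koc C b (d - 1)) (Koc C b d) z"
  proof
    assume "in_image C p (Koc C b (d - 1)) (Koc C b d) z"
    then obtain z' c where z': "rel_cycle C p (Koc C b (d - 1)) z'"
      and c: "is_chain C (Suc p) (prism_sub C (-1) d) c"
      and w: "\<forall>x. z x - z' x - bnd C c x \<noteq> 0 \<longrightarrow> x \<in> prism_sub C (-1) b"
      unfolding in_image_def Koc_def by auto
    have 1: "z' (Vc \<tau> d) = 0" using z' unfolding rel_cycle_def is_chain_def Koc_def prism_sub_def by force
    have "c (Hc \<tau> d) = 0" using c unfolding is_chain_def prism_sub_def by force
    note prev = this
    have 2: "bnd C c (Vc \<tau> d) = 0" by (rule bnd_Vc_min[OF f]) (use h prev in simp_all)
    have "z (Vc \<tau> d) - z' (Vc \<tau> d) - bnd C c (Vc \<tau> d) = 0"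
      using w[rule_format, of "Vc \<tau> d"] bd unfolding prism_sub_def by force
    thus False using 1 2 h by simp
  qed
next
  note f = assms(1)
  note bd = assms(4)
  fix z :: "'a cell \<Rightarrow> 'f" and \<tau> \<sigma>
  assume h: "rel_cycle C p (Kco C n b d) z \<and> z (Vc \<tau> b) \<noteq> 0 \<and> smax C \<tau> = b
       \<and> bnd C z (Vc \<sigma> d) \<noteq> 0 \<and> smax C \<sigma> = d"
  show "\<not> in_image C p (Kco C n (b + 1) d) (Kco C n b d) z"
  proof
    assume "in_image C p (Kco C n (b + 1) d) (Kco C n b d) z"
    then obtain z' c where z': "rel_cycle C p (Kco C n (b + 1) d) z'"
      and c: "is_chain C (Suc p) (prism_sub C b (n + 1)) c"
      and w: "\<forall>x. z x - z' x - bnd C c x \<noteq> 0 \<longrightarrow> x \<in> prism_sub C d (n + 1)"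
      unfolding in_image_def Kco_def by auto
    have 1: "z' (Vc \<tau> b) = 0" using z' unfolding rel_cycle_def is_chain_def Kco_def prism_sub_def by force
    have "c (Hc \<tau> (b - 1)) = 0" using c unfolding is_chain_def prism_sub_def by force
    note prev = this
    have 2: "bnd C c (Vc \<tau> b) = 0" by (rule bnd_Vc_max[OF f]) (use h prev in simp_all)
    have "z (Vc \<tau> b) - z' (Vc \<tau> b) - bnd C c (Vc \<tau> b) = 0"
      using w[rule_format, of "Vc \<tau> b"] bd unfolding prism_sub_def by force
    thus False using 1 2 h by simp
  qed
  show "\<not> in_image C p (Kco C n b (d + 1)) (Kco C n b d) z"
  proof
    assume "in_image C p (Kco C n b (d + 1)) (Kco C n b d) z"
    then obtain z' c where z': "rel_cycle C p (Kco C n b (d + 1)) z'"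
      and w: "\<forall>x. z x - z' x - bnd C c x \<noteq> 0 \<longrightarrow> x \<in> prism_sub C d (n + 1)"
      unfolding in_image_def Kco_def by auto
    have 1: "bnd C z' (Vc \<sigma> d) = 0" using z' unfolding rel_cycle_def Kco_def prism_sub_def by force
    have "bnd C c (Hc \<sigma> (d - 1)) = 0" by (rule bnd_Hc_max[OF f]) (use h in simp)
    note prev = this
    have 2: "bnd C (bnd C c) (Vc \<sigma> d) = 0" by (rule bnd_Vc_max[OF f]) (use h prev in simp_all)
    have "z (Hc \<sigma> (d - 1)) - z' (Hc \<sigma> (d - 1)) - bnd C c (Hc \<sigma> (d - 1)) = 0"
      using w[rule_format, of "Hc \<sigma> (d - 1)"] unfolding prism_sub_def by force
    note prev = this
    have 3: "bnd C (\<lambda>y. z y - z' y - bnd C c y) (Vc \<sigma> d) = 0" by (rule bnd_Vc_max[OF f]) (use h prev in simp_all)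
    show False using bnd_split[of C z "Vc \<sigma> d" z' c] 1 2 3 h by simp
  qed
next
  note f = assms(1)
  note bd = assms(4)
  fix z :: "'a cell \<Rightarrow> 'f" and \<tau> \<sigma>
  assume h: "rel_cycle C p (Kcc C b d) z \<and> z (Vc \<sigma> b) \<noteq> 0 \<and> smax C \<sigma> = b
       \<and> z (Vc \<tau> d) \<noteq> 0 \<and> smin C \<tau> = d"
  show "\<not> in_image C p (Kcc C (b + 1) d) (Kcc C b d) z"
  proof
    assume "in_image C p (Kcc C (b + 1) d) (Kcc C b d) z"
    then obtain z' c where z': "rel_cycle C p (Kcc C (b + 1) d) z'"
      and c: "is_chain C (Suc p) (prism_sub C b d) c"
      and w: "\<forall>x. z x - z' x - bnd C c x = 0"
      unfolding in_image_def Kcc_def by auto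
    have 1: "z' (Vc \<sigma> b) = 0" using z' unfolding rel_cycle_def is_chain_def Kcc_def prism_sub_def by force
    have "c (Hc \<sigma> (b - 1)) = 0" using c unfolding is_chain_def prism_sub_def by force
    note prev = this
    have 2: "bnd C c (Vc \<sigma> b) = 0" by (rule bnd_Vc_max[OF f]) (use h prev in simp_all)
    show False using w[rule_format, of "Vc \<sigma> b"] 1 2 h by simp
  qed
  show "\<not> in_image C p (Kcc C b (d - 1)) (Kcc C b d) z"
  proof
    assume "in_image C p (Kcc C b (d - 1)) (Kcc C b d) z"
    then obtain z' c where z': "rel_cycle C p (Kcc C b (d - 1)) z'"
      and c: "is_chain C (Suc p) (prism_sub C b d) c"
      and w: "\<forall>x. z x - z' x - bnd C c x = 0"
      unfolding in_image_def Kcc_def by auto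
    have 1: "z' (Vc \<tau> d) = 0" using z' unfolding rel_cycle_def is_chain_def Kcc_def prism_sub_def by force
    have "c (Hc \<tau> d) = 0" using c unfolding is_chain_def prism_sub_def by force
    note prev = this
    have 2: "bnd C c (Vc \<tau> d) = 0" by (rule bnd_Vc_min[OF f]) (use h prev in simp_all)
    show False using w[rule_format, of "Vc \<tau> d"] 1 2 h by simp
  qed
next
  note f = assms(1)
  note bd = assms(4)
  fix z :: "'a cell \<Rightarrow> 'f" and \<tau> \<sigma>
  assume h: "rel_cycle C p (Koo C n b d) z
       \<and> bnd C z (Vc \<sigma> b) \<noteq> 0 \<and> smin C \<sigma> = b
       \<and> bnd C z (Vc \<tau> d) \<noteq> 0 \<and> smax C \<tau> = d"
  show "\<not> in_image C p (Koo C n (b - 1) d) (Koo C n b d) z"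
  proof
    assume "in_image C p (Koo C n (b - 1) d) (Koo C n b d) z"
    then obtain z' c where z': "rel_cycle C p (Koo C n (b - 1) d) z'"
      and w: "\<forall>x. z x - z' x - bnd C c x \<noteq> 0 \<longrightarrow> x \<in> prism_sub C (-1) b \<union> prism_sub C d (n + 1)"
      unfolding in_image_def Koo_def by auto
    have 1: "bnd C z' (Vc \<sigma> b) = 0" using z' bd unfolding rel_cycle_def Koo_def prism_sub_def by force
    have 2: "bnd C (bnd C c) (Vc \<sigma> b) = 0"
      by (rule bnd_Vc_min[OF f], use h in simp, rule bnd_Hc_min[OF f], use h in simp)
    have "z (Hc \<sigma> b) - z' (Hc \<sigma> b) - bnd C c (Hc \<sigma> b) = 0"
      using w[rule_format, of "Hc \<sigma> b"] bd unfolding prism_sub_def by force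
    note prev = this
    have 3: "bnd C (\<lambda>y. z y - z' y - bnd C c y) (Vc \<sigma> b) = 0" by (rule bnd_Vc_min[OF f]) (use h prev in simp_all)
    show False using bnd_split[of C z "Vc \<sigma> b" z' c] 1 2 3 h by simp
  qed
  show "\<not> in_image C p (Koo C n b (d + 1)) (Koo C n b d) z"
  proof
    assume "in_image C p (Koo C n b (d + 1)) (Koo C n b d) z"
    then obtain z' c where z': "rel_cycle C p (Koo C n b (d + 1)) z'"
      and w: "\<forall>x. z x - z' x - bnd C c x \<noteq> 0 \<longrightarrow> x \<in> prism_sub C (-1) b \<union> prism_sub C d (n + 1)"
      unfolding in_image_def Koo_def by auto
    have 1: "bnd C z' (Vc \<tau> d) = 0" using z' bd unfolding rel_cycle_def Koo_def prism_sub_def by force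
    have "bnd C c (Hc \<tau> (d - 1)) = 0" by (rule bnd_Hc_max[OF f]) (use h in simp)
    note prev = this
    have 2: "bnd C (bnd C c) (Vc \<tau> d) = 0" by (rule bnd_Vc_max[OF f]) (use h prev in simp_all)
    have "z (Hc \<tau> (d - 1)) - z' (Hc \<tau> (d - 1)) - bnd C c (Hc \<tau> (d - 1)) = 0"
      using w[rule_format, of "Hc \<tau> (d - 1)"] bd unfolding prism_sub_def by force
    note prev = this
    have 3: "bnd C (\<lambda>y. z y - z' y - bnd C c y) (Vc \<tau> d) = 0" by (rule bnd_Vc_max[OF f]) (use h prev in simp_all)
    show False using bnd_split[of C z "Vc \<tau> d" z' c] 1 2 3 h by simp
  qed
qed

end
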